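(* With the notation of the context, the function $f:\mathbb R\times[0,\infty)\to\mathbb R$ satisfies: (i) $f(x,z)\geq x^2$ for all $x\in\mathbb R$, $z\geq 0$; (ii) $f$ is of class $C^2$ and convex; (iii) for every $x\in\mathbb R$: $x\in\bigcup_{n=1}^\infty E_n$ if and only if there exists $z\geq0$ with $f(x,z)=x^2$; (iv) for all $x\in\mathbb R$ and $z\geq0$, if $f(x,z)>x^2$ then $\frac{\partial f}{\partial z}(x,z)<0$.
   Context: Let $\phi:[0,1]\to[0,1]$ be given by: $\phi(\alpha)$ is the unique real $x$ with $2x^3+x=\frac{1-\alpha}{2-\alpha}$ (a continuous decreasing function). Let $F_1\subset F_2\subset\cdots$ be closed subsets of $[0,1]$, and put $E_n=(\mathbb R\setminus(-1,2))\cup\phi(F_n)$. Define $a_n(x)=\max(E_n\cap(-\infty,x])$ and $b_n(x)=\min(E_n\cap[x,\infty))$ for $x\in\mathbb R$. Put $g_n(x)=(x-a_n(x))^3(b_n(x)-x)^3$ and $h_n(z)=((n-z)_+)^3$, where $t_+=\max(t,0)$. Let $(c_n)$ be a sequence of positive reals with $\sum_{n=1}^\infty\frac{81^2}{6}n^3c_n<1$. Define $$f(x,z)=x^2+\sum_{n=1}^\infty c_n g_n(x)h_n(z),\qquad x\in\mathbb R,\ z\geq0.$$ *)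

theory Defs
  imports "HOL-Analysis.Analysis"
begin

definition phi :: "real \<Rightarrow> real" where
  "phi \<alpha> = (THE x. 2 * x ^ 3 + x = (1 - \<alpha>) / (2 - \<alpha>))"

definition E_set :: "(nat \<Rightarrow> real set) \<Rightarrow> nat \<Rightarrow> real set" where
  "E_set F n = (- {-1<..<2}) \<union> phi ` F n"

definition a_fun :: "(nat \<Rightarrow> real set) \<Rightarrow> nat \<Rightarrow> real \<Rightarrow> real" where
  "a_fun F n x = (GREATEST y. y \<in> E_set F n \<and> y \<le> x)"

definition b_fun :: "(nat \<Rightarrow> real set) \<Rightarrow> nat \<Rightarrow> real \<Rightarrow> real" where
  "b_fun F n x = (LEAST y. y \<in> E_set F n \<and> x \<le> y)"

definition g_fun :: "(nat \<Rightarrow> real set) \<Rightarrow> nat \<Rightarrow> real \<Rightarrow> real" where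
  "g_fun F n x = (x - a_fun F n x) ^ 3 * (b_fun F n x - x) ^ 3"

definition h_fun :: "nat \<Rightarrow> real \<Rightarrow> real" where
  "h_fun n z = (max (real n - z) 0) ^ 3"

definition f_fun :: "(nat \<Rightarrow> real set) \<Rightarrow> (nat \<Rightarrow> real) \<Rightarrow> real \<Rightarrow> real \<Rightarrow> real" where
  "f_fun F c x z = x ^ 2 + (\<Sum>k. c (Suc k) * g_fun F (Suc k) x * h_fun (Suc k) z)"

definition C2_on :: "('a::real_normed_vector) set \<Rightarrow> ('a \<Rightarrow> real) \<Rightarrow> bool" where
  "C2_on S u \<longleftrightarrow> (\<exists>u' u''.
      (\<forall>p\<in>S. (u has_derivative blinfun_apply (u' p)) (at p within S)) \<and>
      (\<forall>p\<in>S. (u' has_derivative blinfun_apply (u'' p)) (at p within S)) \<and>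
      continuous_on S u'')"

end

theory Submission
  imports Defs
begin


lemma ineq_core:
  fixes u v :: real
  assumes u0: "0 \<le> u" and uv: "u \<le> v" and s3: "u + v \<le> 3"
  shows "\<bar>u^3 * v^3\<bar> \<le> 81 * u^2"
    "\<bar>3 * u^2 * v^2 * (v - u)\<bar> \<le> 81 * u^2"
    "\<bar>6 * u * v * ((v - u)^2 - u * v)\<bar> \<le> 162 * u"
proof -
  have v3: "v \<le> 3" "0 \<le> v" using assms by auto
  have u3: "u \<le> 3" using assms by auto
  have v2: "v^2 \<le> 9" using power_mono[OF v3(1) v3(2), of 2] by simp
  have v33: "v^3 \<le> 27" using power_mono[OF v3(1) v3(2), of 3] by simp
  have "u * v^3 \<le> 3 * 27" by (rule mult_mono) (use u3 v33 v3 in auto)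
  then have "u^2 * (u * v^3) \<le> u^2 * 81" by (intro mult_left_mono) auto
  moreover have "\<bar>u^3 * v^3\<bar> = u^2 * (u * v^3)" using u0 v3 by (simp add: power3_eq_cube power2_eq_square)
  ultimately show "\<bar>u^3 * v^3\<bar> \<le> 81 * u^2" by simp
  have "v^2 * (v - u) \<le> 9 * 3" by (rule mult_mono) (use v2 v3 uv u0 in auto)
  then have "3 * u^2 * (v^2 * (v - u)) \<le> 3 * u^2 * 27" by (intro mult_left_mono) auto
  moreover have "\<bar>3 * u^2 * v^2 * (v - u)\<bar> = 3 * u^2 * (v^2 * (v - u))" using u0 uv by (simp add: abs_mult)
  ultimately show "\<bar>3 * u^2 * v^2 * (v - u)\<bar> \<le> 81 * u^2" by simp
  have d: "(v - u)^2 \<le> 9" using power_mono[of "v-u" 3 2] uv v3 u0 by simp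
  have e: "u * v \<le> 9" using mult_mono[OF u3 v3(1)] u0 v3 by simp
  have X: "\<bar>(v - u)^2 - u * v\<bar> \<le> 9" using d e zero_le_power2[of "v-u"] mult_nonneg_nonneg[OF u0 v3(2)] unfolding abs_le_iff by linarith
  have "v * \<bar>(v - u)^2 - u * v\<bar> \<le> 3 * 9" by (rule mult_mono) (use v3 X in auto)
  then have "6 * u * (v * \<bar>(v - u)^2 - u * v\<bar>) \<le> 6 * u * 27" by (intro mult_left_mono) (use u0 in auto)
  moreover have "\<bar>6 * u * v * ((v - u)^2 - u * v)\<bar> = 6 * u * (v * \<bar>(v - u)^2 - u * v\<bar>)" using u0 v3 by (simp add: abs_mult)
  ultimately show "\<bar>6 * u * v * ((v - u)^2 - u * v)\<bar> \<le> 162 * u" by simp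
qed

lemma ineq_min:
  fixes u v :: real
  assumes u0: "0 \<le> u" and v0: "0 \<le> v" and s3: "u + v \<le> 3"
  shows "\<bar>u^3 * v^3\<bar> \<le> 81 * (min u v)^2"
    "\<bar>3 * u^2 * v^2 * (v - u)\<bar> \<le> 81 * (min u v)^2"
    "\<bar>6 * u * v * ((v - u)^2 - u * v)\<bar> \<le> 162 * min u v"
proof -
  have "(\<bar>u^3 * v^3\<bar> \<le> 81 * (min u v)^2) \<and> (\<bar>3 * u^2 * v^2 * (v - u)\<bar> \<le> 81 * (min u v)^2)
    \<and> (\<bar>6 * u * v * ((v - u)^2 - u * v)\<bar> \<le> 162 * min u v)"
  proof (cases "u \<le> v")
    case True then show ?thesis using ineq_core[OF u0 True s3] by (simp add: min_def)
  next
    case False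
    then have vu: "v \<le> u" by simp
    have s: "v + u \<le> 3" using s3 by simp
    note c = ineq_core[OF v0 vu s]
    have 1: "\<bar>u^3 * v^3\<bar> = \<bar>v^3 * u^3\<bar>" by (simp add: mult.commute)
    have 2: "\<bar>3 * u^2 * v^2 * (v - u)\<bar> = \<bar>3 * v^2 * u^2 * (u - v)\<bar>" by (simp add: abs_mult abs_minus_commute)
    have 3: "\<bar>6 * u * v * ((v - u)^2 - u * v)\<bar> = \<bar>6 * v * u * ((u - v)^2 - v * u)\<bar>"
      by (simp add: power2_commute mult.commute mult.left_commute)
    have mv: "min u v = v" using vu by simp
    show ?thesis using c unfolding 1 2 3 mv by simp
  qed
  then show "\<bar>u^3 * v^3\<bar> \<le> 81 * (min u v)^2"
    "\<bar>3 * u^2 * v^2 * (v - u)\<bar> \<le> 81 * (min u v)^2"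
    "\<bar>6 * u * v * ((v - u)^2 - u * v)\<bar> \<le> 162 * min u v" by auto
qed

lemma ineq_crude:
  fixes u v :: real
  assumes u0: "0 \<le> u" and v0: "0 \<le> v" and s3: "u + v \<le> 3"
  shows "\<bar>u^3 * v^3\<bar> \<le> 1000"
    "\<bar>3 * u^2 * v^2 * (v - u)\<bar> \<le> 1000"
    "\<bar>6 * u * v * ((v - u)^2 - u * v)\<bar> \<le> 1000"
proof -
  have m: "min u v \<le> 3" "0 \<le> min u v" using assms by auto
  have "(min u v)^2 \<le> 9" using power_mono[OF m(1) m(2), of 2] by simp
  then show "\<bar>u^3 * v^3\<bar> \<le> 1000"
    "\<bar>3 * u^2 * v^2 * (v - u)\<bar> \<le> 1000"
    "\<bar>6 * u * v * ((v - u)^2 - u * v)\<bar> \<le> 1000"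
    using ineq_min[OF assms] m by linarith+
qed

lemma deriv_zero_bound:
  fixes F :: "real \<Rightarrow> real"
  assumes F0: "F x = 0" and bd: "\<And>y. \<bar>y - x\<bar> < 1 \<Longrightarrow> \<bar>F y\<bar> \<le> C * (y - x)^2"
  shows "(F has_real_derivative 0) (at x)"
  unfolding DERIV_def
proof (rule Lim_null_comparison)
  have key: "norm ((F (x + h) - F x) / h) \<le> C * \<bar>h\<bar>" if h: "h \<noteq> 0" "\<bar>h\<bar> < 1" for h
  proof -
    have "\<bar>F (x + h)\<bar> \<le> C * h^2" using bd[of "x+h"] h by simp
    then have "\<bar>F (x + h)\<bar> / \<bar>h\<bar> \<le> C * h^2 / \<bar>h\<bar>" by (intro divide_right_mono) auto
    also have "C * h^2 / \<bar>h\<bar> = C * \<bar>h\<bar>"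
    proof -
      have "h^2 = \<bar>h\<bar> * \<bar>h\<bar>" by (simp add: power2_eq_square)
      then have "C * h^2 / \<bar>h\<bar> = (C * \<bar>h\<bar>) * \<bar>h\<bar> / \<bar>h\<bar>" by (simp only: mult.assoc)
      also have "\<dots> = C * \<bar>h\<bar>" using h by (intro nonzero_mult_div_cancel_right) simp
      finally show ?thesis .
    qed
    finally show ?thesis using F0 by (simp add: abs_divide)
  qed
  show "\<forall>\<^sub>F h in at 0. norm ((F (x + h) - F x) / h) \<le> C * \<bar>h\<bar>"
    unfolding eventually_at using key by (intro exI[of _ 1]) auto
  show "((\<lambda>h. C * \<bar>h\<bar>) \<longlongrightarrow> 0) (at 0)"
    by (auto intro!: tendsto_eq_intros)
qed

lemma cont_zero_bound:
  fixes F :: "real \<Rightarrow> real"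
  assumes F0: "F x = 0" and bd: "\<And>y. \<bar>F y\<bar> \<le> C * \<bar>y - x\<bar>"
  shows "isCont F x"
  unfolding isCont_iff F0
proof (rule Lim_null_comparison)
  show "\<forall>\<^sub>F h in at 0. norm (F (x + h)) \<le> C * \<bar>h\<bar>" using bd[of "x + _"] by (auto intro!: always_eventually)
  show "((\<lambda>h. C * \<bar>h\<bar>) \<longlongrightarrow> 0) (at 0)"
    by (auto intro!: tendsto_eq_intros)
qed



definition aE :: "real set \<Rightarrow> real \<Rightarrow> real" where
  "aE E x = (GREATEST y. y \<in> E \<and> y \<le> x)"
definition bE :: "real set \<Rightarrow> real \<Rightarrow> real" where
  "bE E x = (LEAST y. y \<in> E \<and> x \<le> y)"

definition G0 :: "real set \<Rightarrow> real \<Rightarrow> real" where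
  "G0 E x = (x - aE E x)^3 * (bE E x - x)^3"
definition G1 :: "real set \<Rightarrow> real \<Rightarrow> real" where
  "G1 E x = 3 * (x - aE E x)^2 * (bE E x - x)^2 * ((bE E x - x) - (x - aE E x))"
definition G2 :: "real set \<Rightarrow> real \<Rightarrow> real" where
  "G2 E x = 6 * (x - aE E x) * (bE E x - x) * (((bE E x - x) - (x - aE E x))^2 - (x - aE E x) * (bE E x - x))"

locale gapset =
  fixes E :: "real set"
  assumes clE: "closed E" and compE: "-{-1<..<2} \<subseteq> E"
begin

lemma m1E: "-1 \<in> E" and twoE: "2 \<in> E" using compE by auto

lemma aE_props: "aE E x \<in> E" "aE E x \<le> x" "\<And>y. y \<in> E \<Longrightarrow> y \<le> x \<Longrightarrow> y \<le> aE E x"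
proof -
  define S where "S = E \<inter> {..x}"
  have "min x (-1) \<in> S" using compE unfolding S_def by auto
  then have ne: "S \<noteq> {}" by auto
  have bd: "bdd_above S" unfolding S_def by auto
  have cl: "closed S" unfolding S_def using clE by auto
  have SS: "Sup S \<in> S" using closed_contains_Sup[OF ne bd cl] .
  have ub: "\<And>y. y \<in> S \<Longrightarrow> y \<le> Sup S" using bd by (simp add: cSup_upper)
  have eq: "aE E x = Sup S" unfolding aE_def
    by (rule Greatest_equality) (use SS ub in \<open>auto simp: S_def\<close>)
  show "aE E x \<in> E" "aE E x \<le> x" using SS eq by (auto simp: S_def)
  show "\<And>y. y \<in> E \<Longrightarrow> y \<le> x \<Longrightarrow> y \<le> aE E x" using ub eq by (auto simp: S_def)
qed

lemma bE_props: "bE E x \<in> E" "x \<le> bE E x" "\<And>y. y \<in> E \<Longrightarrow> x \<le> y \<Longrightarrow> bE E x \<le> y"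
proof -
  define S where "S = E \<inter> {x..}"
  have "max x 2 \<in> S" using compE unfolding S_def by auto
  then have ne: "S \<noteq> {}" by auto
  have bd: "bdd_below S" unfolding S_def by auto
  have cl: "closed S" unfolding S_def using clE by auto
  have SS: "Inf S \<in> S" using closed_contains_Inf[OF ne bd cl] .
  have ub: "\<And>y. y \<in> S \<Longrightarrow> Inf S \<le> y" using bd by (simp add: cInf_lower)
  have eq: "bE E x = Inf S" unfolding bE_def
    by (rule Least_equality) (use SS ub in \<open>auto simp: S_def\<close>)
  show "bE E x \<in> E" "x \<le> bE E x" using SS eq by (auto simp: S_def)
  show "\<And>y. y \<in> E \<Longrightarrow> x \<le> y \<Longrightarrow> bE E x \<le> y" using ub eq by (auto simp: S_def)
qed

lemma inE: "x \<in> E \<Longrightarrow> aE E x = x \<and> bE E x = x"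
  using aE_props[of x] bE_props[of x] by force

lemma uv_bounds: "0 \<le> x - aE E x" "0 \<le> bE E x - x" "bE E x - aE E x \<le> 3"
proof -
  show "0 \<le> x - aE E x" "0 \<le> bE E x - x" using aE_props bE_props by auto
  show "bE E x - aE E x \<le> 3"
  proof (cases "x \<in> E")
    case True then show ?thesis using inE by simp
  next
    case False
    then have "-1 < x" "x < 2" using compE by auto
    then have "-1 \<le> aE E x" "bE E x \<le> 2" using aE_props(3)[OF m1E] bE_props(3)[OF twoE] by auto
    then show ?thesis by simp
  qed
qed

lemma notE: assumes "x \<notin> E"
  shows "aE E x < x" "x < bE E x"
    "\<And>y. aE E x < y \<Longrightarrow> y < bE E x \<Longrightarrow> y \<notin> E \<and> aE E y = aE E x \<and> bE E y = bE E x"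
proof -
  show ax: "aE E x < x" using aE_props[of x] assms by (metis order_less_le)
  show xb: "x < bE E x" using bE_props[of x] assms by (metis order_less_le)
  fix y assume y: "aE E x < y" "y < bE E x"
  have gap: "\<And>z. aE E x < z \<Longrightarrow> z < bE E x \<Longrightarrow> z \<notin> E"
  proof
    fix z assume z: "aE E x < z" "z < bE E x" "z \<in> E"
    show False
    proof (cases "z \<le> x")
      case True then show False using aE_props(3)[OF z(3), of x] z by auto
    next
      case False then show False using bE_props(3)[OF z(3), of x] z by auto
    qed
  qed
  have "y \<notin> E" using gap y .
  moreover have "aE E y = aE E x"
  proof (rule antisym)
    show "aE E x \<le> aE E y" using aE_props(3)[OF aE_props(1)[of x]] y by auto
    show "aE E y \<le> aE E x"
    proof (rule ccontr)
      assume "\<not> aE E y \<le> aE E x"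
      then show False using gap[of "aE E y"] aE_props[of y] y by auto
    qed
  qed
  moreover have "bE E y = bE E x"
  proof (rule antisym)
    show "bE E y \<le> bE E x" using bE_props(3)[OF bE_props(1)[of x]] y by auto
    show "bE E x \<le> bE E y"
    proof (rule ccontr)
      assume "\<not> bE E x \<le> bE E y"
      then show False using gap[of "bE E y"] bE_props[of y] y by auto
    qed
  qed
  ultimately show "y \<notin> E \<and> aE E y = aE E x \<and> bE E y = bE E x" by blast
qed

lemma near_E: assumes "x \<in> E"
  shows "min (y - aE E y) (bE E y - y) \<le> \<bar>y - x\<bar>"
proof (cases "x \<le> y")
  case True
  then have "x \<le> aE E y" using aE_props(3)[OF assms] by auto
  then show ?thesis using True by auto
next
  case False
  then have "bE E y \<le> x" using bE_props(3)[OF assms] by auto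
  then show ?thesis using False by auto
qed


lemma poly_deriv0:
  fixes pa pb x :: real shows
  "((\<lambda>y. (y - pa)^3 * (pb - y)^3) has_real_derivative
     3 * (x - pa)^2 * (pb - x)^2 * ((pb - x) - (x - pa))) (at x)"
  by (auto intro!: derivative_eq_intros simp: power2_eq_square power3_eq_cube algebra_simps)

lemma poly_deriv1:
  fixes pa pb x :: real shows
  "((\<lambda>y. 3 * (y - pa)^2 * (pb - y)^2 * ((pb - y) - (y - pa))) has_real_derivative
     6 * (x - pa) * (pb - x) * (((pb - x) - (x - pa))^2 - (x - pa) * (pb - x))) (at x)"
  by (auto intro!: derivative_eq_intros simp: power2_eq_square power3_eq_cube algebra_simps)

lemma poly_cont2: fixes pa pb x :: real shows "isCont (\<lambda>y. 6 * (y - pa) * (pb - y) * (((pb - y) - (y - pa))^2 - (y - pa) * (pb - y))) x"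
  by (intro continuous_intros)

lemma G_min_bounds:
  "\<bar>G0 E y\<bar> \<le> 81 * (min (y - aE E y) (bE E y - y))^2"
  "\<bar>G1 E y\<bar> \<le> 81 * (min (y - aE E y) (bE E y - y))^2"
  "\<bar>G2 E y\<bar> \<le> 162 * (min (y - aE E y) (bE E y - y))"
  using ineq_min[OF uv_bounds(1) uv_bounds(2), of y y] uv_bounds(3)[of y]
  unfolding G0_def G1_def G2_def by auto

lemma G_crude:
  "\<bar>G0 E y\<bar> \<le> 1000" "\<bar>G1 E y\<bar> \<le> 1000" "\<bar>G2 E y\<bar> \<le> 1000"
  using ineq_crude[OF uv_bounds(1) uv_bounds(2), of y y] uv_bounds(3)[of y]
  unfolding G0_def G1_def G2_def by auto

lemma G_nonneg: "0 \<le> G0 E y"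
  using uv_bounds[of y] unfolding G0_def by auto

lemma G_zero_iff: "G0 E y = 0 \<longleftrightarrow> y \<in> E"
proof
  assume "y \<in> E" then show "G0 E y = 0" using inE unfolding G0_def by simp
next
  assume "G0 E y = 0"
  then have "y - aE E y = 0 \<or> bE E y - y = 0" unfolding G0_def by simp
  then show "y \<in> E" using aE_props(1)[of y] bE_props(1)[of y] by auto
qed

lemma near_sq: assumes "x \<in> E"
  shows "(min (y - aE E y) (bE E y - y))^2 \<le> (y - x)^2"
proof -
  have "0 \<le> min (y - aE E y) (bE E y - y)" using uv_bounds[of y] by auto
  then have "(min (y - aE E y) (bE E y - y))^2 \<le> \<bar>y - x\<bar>^2"
    using near_E[OF assms, of y] by (intro power_mono) auto
  then show ?thesis by simp
qed

lemma G0_deriv: "(G0 E has_real_derivative G1 E x) (at x)"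
proof (cases "x \<in> E")
  case True
  have "G1 E x = 0" using inE[OF True] unfolding G1_def by simp
  moreover have "(G0 E has_real_derivative 0) (at x)"
  proof (rule deriv_zero_bound)
    show "G0 E x = 0" using True G_zero_iff by simp
    fix y show "\<bar>G0 E y\<bar> \<le> 81 * (y - x)^2"
      using G_min_bounds(1)[of y] near_sq[OF True, of y] by linarith
  qed
  ultimately show ?thesis by simp
next
  case False
  note n = notE[OF False]
  have "(G0 E has_real_derivative 3 * (x - aE E x)^2 * (bE E x - x)^2 * ((bE E x - x) - (x - aE E x))) (at x)"
  proof (rule has_field_derivative_transform_within_open[OF poly_deriv0, of "{aE E x<..<bE E x}"])
    show "open {aE E x<..<bE E x}" by simp
    show "x \<in> {aE E x<..<bE E x}" using n(1,2) by simp
    fix y assume "y \<in> {aE E x<..<bE E x}"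
    then show "(y - aE E x)^3 * (bE E x - y)^3 = G0 E y" using n(3)[of y] unfolding G0_def by simp
  qed
  then show ?thesis by (simp add: G1_def)
qed

lemma G1_deriv: "(G1 E has_real_derivative G2 E x) (at x)"
proof (cases "x \<in> E")
  case True
  have "G2 E x = 0" using inE[OF True] unfolding G2_def by simp
  moreover have "(G1 E has_real_derivative 0) (at x)"
  proof (rule deriv_zero_bound)
    show "G1 E x = 0" using inE[OF True] unfolding G1_def by simp
    fix y show "\<bar>G1 E y\<bar> \<le> 81 * (y - x)^2"
      using G_min_bounds(2)[of y] near_sq[OF True, of y] by linarith
  qed
  ultimately show ?thesis by simp
next
  case False
  note n = notE[OF False]
  have "(G1 E has_real_derivative 6 * (x - aE E x) * (bE E x - x) * (((bE E x - x) - (x - aE E x))^2 - (x - aE E x) * (bE E x - x))) (at x)"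
  proof (rule has_field_derivative_transform_within_open[OF poly_deriv1, of "{aE E x<..<bE E x}"])
    show "open {aE E x<..<bE E x}" by simp
    show "x \<in> {aE E x<..<bE E x}" using n(1,2) by simp
    fix y assume "y \<in> {aE E x<..<bE E x}"
    then show "3 * (y - aE E x)^2 * (bE E x - y)^2 * ((bE E x - y) - (y - aE E x)) = G1 E y"
      using n(3)[of y] unfolding G1_def by simp
  qed
  then show ?thesis by (simp add: G2_def)
qed

lemma G2_cont: "isCont (G2 E) x"
proof (cases "x \<in> E")
  case True
  show ?thesis
  proof (rule cont_zero_bound)
    show "G2 E x = 0" using inE[OF True] unfolding G2_def by simp
    fix y show "\<bar>G2 E y\<bar> \<le> 162 * \<bar>y - x\<bar>"
    proof -
      have "162 * min (y - aE E y) (bE E y - y) \<le> 162 * \<bar>y - x\<bar>"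
        using near_E[OF True, of y] by (intro mult_left_mono) auto
      then show ?thesis using G_min_bounds(3)[of y] by linarith
    qed
  qed
next
  case False
  note n = notE[OF False]
  have "\<forall>\<^sub>F y in nhds x. 6 * (y - aE E x) * (bE E x - y) * (((bE E x - y) - (y - aE E x))^2 - (y - aE E x) * (bE E x - y)) = G2 E y" (is "\<forall>\<^sub>F y in nhds x. ?P y = _")
    unfolding eventually_nhds
  proof (intro exI[of _ "{aE E x<..<bE E x}"] conjI ballI)
    show "open {aE E x<..<bE E x}" by simp
    show "x \<in> {aE E x<..<bE E x}" using n(1,2) by simp
    fix y assume "y \<in> {aE E x<..<bE E x}"
    then have e: "aE E y = aE E x" "bE E y = bE E x" using n(3)[of y] by auto
    show "6 * (y - aE E x) * (bE E x - y) * (((bE E x - y) - (y - aE E x))^2 - (y - aE E x) * (bE E x - y)) = G2 E y"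
      unfolding G2_def e ..
  qed
  then have "isCont ?P x = isCont (G2 E) x" by (rule isCont_cong)
  then show ?thesis using poly_cont2[where pa="aE E x" and pb="bE E x" and x=x] by simp
qed
end


lemma pos2_deriv: "((\<lambda>t::real. (max t 0)^2) has_real_derivative 2 * max t 0) (at t)"
proof (cases "t = 0")
  case True
  have "((\<lambda>t::real. (max t 0)^2) has_real_derivative 0) (at t)"
  proof (rule deriv_zero_bound[where C=1])
    fix y :: real
    have "(max y 0)^2 \<le> \<bar>y\<bar>^2" by (intro power_mono) auto
    then show "\<bar>(max y 0)^2\<bar> \<le> 1 * (y - t)^2" using True by simp
  qed (use True in simp)
  then show ?thesis using True by simp
next
  case False
  show ?thesis
  proof (cases "t > 0")
    case True
    have d: "((\<lambda>t::real. t^2) has_real_derivative 2 * max t 0) (at t)" using True by (auto intro!: derivative_eq_intros)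
    show ?thesis
      by (rule has_field_derivative_transform_within_open[OF d, of "{0<..}"]) (use True in auto)
  next
    case f: False
    then have t: "t < 0" using False by simp
    have d: "((\<lambda>t::real. 0) has_real_derivative 2 * max t 0) (at t)" using t by simp
    show ?thesis
      by (rule has_field_derivative_transform_within_open[OF d, of "{..<0}"]) (use t in auto)
  qed
qed

lemma pos3_deriv: "((\<lambda>t::real. (max t 0)^3) has_real_derivative 3 * (max t 0)^2) (at t)"
proof (cases "t = 0")
  case True
  have "((\<lambda>t::real. (max t 0)^3) has_real_derivative 0) (at t)"
  proof (rule deriv_zero_bound[where C=1])
    fix y :: real assume y: "\<bar>y - t\<bar> < 1"
    define m where "m = max y 0"
    have m: "0 \<le> m" "m \<le> \<bar>y\<bar>" "m \<le> 1" using y True by (auto simp: m_def)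
    have "m^3 = m * m^2" by (simp add: power3_eq_cube power2_eq_square)
    also have "\<dots> \<le> 1 * m^2" using m by (intro mult_right_mono) auto
    also have "\<dots> \<le> \<bar>y\<bar>^2" proof -
      have "m^2 \<le> \<bar>y\<bar>^2" by (rule power_mono) (use m in auto)
      then show ?thesis by simp
    qed
    finally show "\<bar>(max y 0)^3\<bar> \<le> 1 * (y - t)^2" using True m by (simp add: m_def[symmetric])
  qed (use True in simp)
  then show ?thesis using True by simp
next
  case False
  show ?thesis
  proof (cases "t > 0")
    case True
    have d: "((\<lambda>t::real. t^3) has_real_derivative 3 * (max t 0)^2) (at t)" using True by (auto intro!: derivative_eq_intros)
    show ?thesis
      by (rule has_field_derivative_transform_within_open[OF d, of "{0<..}"]) (use True in auto)
  next
    case f: False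
    then have t: "t < 0" using False by simp
    have d: "((\<lambda>t::real. 0) has_real_derivative 3 * (max t 0)^2) (at t)" using t by simp
    show ?thesis
      by (rule has_field_derivative_transform_within_open[OF d, of "{..<0}"]) (use t in auto)
  qed
qed

definition H1 :: "nat \<Rightarrow> real \<Rightarrow> real" where "H1 n z = - 3 * (max (real n - z) 0)^2"
definition H2 :: "nat \<Rightarrow> real \<Rightarrow> real" where "H2 n z = 6 * max (real n - z) 0"

lemma H0_deriv: "(h_fun n has_real_derivative H1 n z) (at z)"
proof -
  have "((\<lambda>z. (max (real n - z) 0)^3) has_real_derivative 3 * (max (real n - z) 0)^2 * (-1)) (at z)"
    by (rule DERIV_chain2[OF pos3_deriv]) (auto intro!: derivative_eq_intros)
  then show ?thesis unfolding h_fun_def H1_def by (simp add: mult.commute)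
qed

lemma H1_deriv: "(H1 n has_real_derivative H2 n z) (at z)"
proof -
  have "((\<lambda>z. (max (real n - z) 0)^2) has_real_derivative 2 * max (real n - z) 0 * (-1)) (at z)"
    by (rule DERIV_chain2[OF pos2_deriv]) (auto intro!: derivative_eq_intros)
  then have "((\<lambda>z. -3 * (max (real n - z) 0)^2) has_real_derivative -3 * (2 * max (real n - z) 0 * (-1))) (at z)"
    by (rule DERIV_cmult)
  then show ?thesis unfolding H2_def H1_def by simp
qed

lemma H2_isCont: "isCont (H2 n) z"
  unfolding H2_def by (intro continuous_intros)

lemma H2_cont: "continuous_on A (H2 n)"
  unfolding H2_def by (intro continuous_intros)

lemma H_bounds:
  assumes "0 \<le> z" "1 \<le> n"
  shows "\<bar>h_fun n z\<bar> \<le> 6 * real n ^ 3" "\<bar>H1 n z\<bar> \<le> 6 * real n ^ 3" "\<bar>H2 n z\<bar> \<le> 6 * real n ^ 3"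
    "0 \<le> h_fun n z" "h_fun n z \<le> real n ^ 3"
proof -
  define m where "m = max (real n - z) 0"
  have m: "0 \<le> m" "m \<le> real n" using assms by (auto simp: m_def)
  have n1: "1 \<le> real n" using assms by simp
  have m3: "m^3 \<le> real n ^ 3" using m by (intro power_mono) auto
  have m2: "m^2 \<le> real n ^ 2" using m by (intro power_mono) auto
  have n23: "real n ^ 2 \<le> real n ^ 3" using n1 by (intro power_increasing) auto
  have n13: "real n \<le> real n ^ 3" using power_increasing[of 1 3 "real n"] n1 by simp
  show "0 \<le> h_fun n z" "h_fun n z \<le> real n ^ 3" using m m3 unfolding h_fun_def m_def[symmetric] by auto
  have "\<bar>h_fun n z\<bar> = m^3" using m unfolding h_fun_def m_def[symmetric] by simp
  moreover have "0 \<le> real n ^ 3" by simp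
  ultimately show "\<bar>h_fun n z\<bar> \<le> 6 * real n ^ 3" using m3 by linarith
  have "\<bar>H1 n z\<bar> = 3 * m^2" unfolding H1_def m_def[symmetric] by simp
  then show "\<bar>H1 n z\<bar> \<le> 6 * real n ^ 3" using m2 n23 by linarith
  have "\<bar>H2 n z\<bar> = 6 * m" unfolding H2_def m_def[symmetric] using m by simp
  then show "\<bar>H2 n z\<bar> \<le> 6 * real n ^ 3" using m n13 by linarith
qed

lemma series_grad:
  fixes T P Q :: "nat \<Rightarrow> real \<times> real \<Rightarrow> real" and S :: "(real \<times> real) set"
  assumes cS: "convex S"
    and der: "\<And>k p. p \<in> S \<Longrightarrow> (T k has_derivative (\<lambda>d. P k p * fst d + Q k p * snd d)) (at p within S)"
    and bP: "\<And>k p. p \<in> S \<Longrightarrow> \<bar>P k p\<bar> \<le> M k"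
    and bQ: "\<And>k p. p \<in> S \<Longrightarrow> \<bar>Q k p\<bar> \<le> M k"
    and sM: "summable M"
    and sT: "\<And>p. p \<in> S \<Longrightarrow> summable (\<lambda>k. T k p)"
    and p: "p \<in> S"
  shows "((\<lambda>p. \<Sum>k. T k p) has_derivative (\<lambda>d. (\<Sum>k. P k p) * fst d + (\<Sum>k. Q k p) * snd d)) (at p within S)"
proof -
  have uP: "uniform_limit S (\<lambda>n x. \<Sum>i<n. P i x) (\<lambda>x. \<Sum>i. P i x) sequentially"
    by (rule Weierstrass_m_test[OF _ sM]) (use bP in auto)
  have uQ: "uniform_limit S (\<lambda>n x. \<Sum>i<n. Q i x) (\<lambda>x. \<Sum>i. Q i x) sequentially"
    by (rule Weierstrass_m_test[OF _ sM]) (use bQ in auto)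
  have unif: "\<forall>\<^sub>F n in sequentially. \<forall>x\<in>S. \<forall>h. norm ((\<Sum>i<n. P i x * fst h + Q i x * snd h) -
      ((\<Sum>k. P k x) * fst h + (\<Sum>k. Q k x) * snd h)) \<le> e * norm h" if e: "e > 0" for e
  proof -
    have e2: "e / 2 > 0" using e by simp
    have "\<forall>\<^sub>F n in sequentially. \<forall>x\<in>S. dist (\<Sum>i<n. P i x) (\<Sum>i. P i x) < e / 2"
      using uniform_limitD[OF uP e2] .
    moreover have "\<forall>\<^sub>F n in sequentially. \<forall>x\<in>S. dist (\<Sum>i<n. Q i x) (\<Sum>i. Q i x) < e / 2"
      using uniform_limitD[OF uQ e2] .
    ultimately show ?thesis
    proof eventually_elim
      case (elim n)
      show ?case
      proof (intro ballI allI)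
        fix x h assume x: "x \<in> S"
        have a: "\<bar>(\<Sum>i<n. P i x) - (\<Sum>i. P i x)\<bar> \<le> e / 2" using elim(1) x by (auto simp: dist_real_def)
        have b: "\<bar>(\<Sum>i<n. Q i x) - (\<Sum>i. Q i x)\<bar> \<le> e / 2" using elim(2) x by (auto simp: dist_real_def)
        have eq: "(\<Sum>i<n. P i x * fst h + Q i x * snd h) - ((\<Sum>k. P k x) * fst h + (\<Sum>k. Q k x) * snd h)
          = ((\<Sum>i<n. P i x) - (\<Sum>i. P i x)) * fst h + ((\<Sum>i<n. Q i x) - (\<Sum>i. Q i x)) * snd h"
          by (simp add: sum.distrib sum_distrib_right sum_distrib_left algebra_simps)
        have "\<bar>((\<Sum>i<n. P i x) - (\<Sum>i. P i x)) * fst h\<bar> \<le> e / 2 * norm h"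
          unfolding abs_mult using a e norm_fst_le[of "fst h" "snd h"]
          by (intro mult_mono) auto
        moreover have "\<bar>((\<Sum>i<n. Q i x) - (\<Sum>i. Q i x)) * snd h\<bar> \<le> e / 2 * norm h"
          unfolding abs_mult using b e norm_snd_le[of "snd h" "fst h"]
          by (intro mult_mono) auto
        ultimately show "norm ((\<Sum>i<n. P i x * fst h + Q i x * snd h) -
          ((\<Sum>k. P k x) * fst h + (\<Sum>k. Q k x) * snd h)) \<le> e * norm h"
          unfolding eq real_norm_def by linarith
      qed
    qed
  qed
  obtain g where g: "\<forall>x\<in>S. (\<lambda>n. T n x) sums g x \<and>
      (g has_derivative (\<lambda>d. (\<Sum>k. P k x) * fst d + (\<Sum>k. Q k x) * snd d)) (at x within S)"
    using has_derivative_series[OF cS der unif p summable_sums[OF sT[OF p]]] by blast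
  have geq: "(\<Sum>k. T k x) = g x" if "x \<in> S" for x using g that sums_unique by metis
  have gd: "(g has_derivative (\<lambda>d. (\<Sum>k. P k p) * fst d + (\<Sum>k. Q k p) * snd d)) (at p within S)"
    using g p by blast
  show ?thesis
    by (rule has_derivative_transform[OF p _ gd]) (rule geq)
qed

lemma series_cont:
  fixes P :: "nat \<Rightarrow> real \<times> real \<Rightarrow> real"
  assumes c: "\<And>k. continuous_on S (P k)"
    and bP: "\<And>k p. p \<in> S \<Longrightarrow> \<bar>P k p\<bar> \<le> M k"
    and sM: "summable M"
  shows "continuous_on S (\<lambda>p. \<Sum>k. P k p)"
proof (rule uniform_limit_theorem)
  show "uniform_limit S (\<lambda>n x. \<Sum>i<n. P i x) (\<lambda>x. \<Sum>i. P i x) sequentially"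
    by (rule Weierstrass_m_test[OF _ sM]) (use bP in auto)
  show "\<forall>\<^sub>F n in sequentially. continuous_on S (\<lambda>x. \<Sum>i<n. P i x)"
    using c by (auto intro!: always_eventually continuous_on_sum)
qed simp



lemma cube_strict_mono: fixes x y :: real assumes "x < y" shows "x^3 < y^3"
proof (cases "0 \<le> x")
  case True then show ?thesis using assms by (intro power_strict_mono) auto
next
  case False
  show ?thesis
  proof (cases "y \<le> 0")
    case True
    have "(-y)^3 < (-x)^3" using assms True by (intro power_strict_mono) auto
    then show ?thesis by simp
  next
    case f2: False
    have "x^3 = x * x^2" by (simp add: power3_eq_cube power2_eq_square)
    moreover have "0 < x^2" using False by simp
    ultimately have "x^3 < 0" using False mult_neg_pos[of x "x^2"] by simp
    moreover have "0 < y^3" using f2 by simp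
    ultimately show ?thesis by linarith
  qed
qed

lemma phi_eq: assumes "0 \<le> \<alpha>" "\<alpha> \<le> 1"
  shows "2 * phi \<alpha> ^ 3 + phi \<alpha> = (1 - \<alpha>) / (2 - \<alpha>)"
proof -
  define q where "q = (1 - \<alpha>) / (2 - \<alpha>)"
  have q: "0 \<le> q" "q \<le> 3" using assms unfolding q_def by (auto simp: divide_simps)
  have "\<exists>x. 0 \<le> x \<and> x \<le> 1 \<and> 2 * x ^ 3 + x = q"
    by (rule IVT') (use q in \<open>auto intro!: continuous_intros\<close>)
  then obtain x0 where x0: "2 * x0 ^ 3 + x0 = q" by blast
  have uniq: "x = x0" if "2 * x ^ 3 + x = q" for x
  proof (rule ccontr)
    assume "x \<noteq> x0"
    then consider "x < x0" | "x0 < x" by linarith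
    then show False
    proof cases
      case 1 then show False using cube_strict_mono[OF 1] that x0 by linarith
    next
      case 2 then show False using cube_strict_mono[OF 2] that x0 by linarith
    qed
  qed
  have "(THE x. 2 * x ^ 3 + x = q) = x0" by (rule the_equality[where P="\<lambda>x. 2 * x ^ 3 + x = q", OF x0 uniq])
  then have "phi \<alpha> = x0" unfolding phi_def q_def .
  then show ?thesis using x0 q_def by simp
qed

lemma phi_image_closed:
  assumes "closed A" "A \<subseteq> {0..1}"
  shows "closed (phi ` A)"
proof -
  define q where "q = (\<lambda>\<alpha>::real. (1 - \<alpha>) / (2 - \<alpha>))"
  have "\<forall>x\<in>A. 2 - x \<noteq> 0" using assms(2) by force
  then have cq: "continuous_on A q" unfolding q_def
    by (intro continuous_intros) auto
  have "bounded A" by (rule bounded_subset[OF bounded_closed_interval assms(2)])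
  then have compA: "compact A" using assms(1) by (simp add: compact_eq_bounded_closed)
  have cqA: "compact (q ` A)" by (rule compact_continuous_image[OF cq compA])
  have eq: "phi ` A = (\<lambda>x. 2 * x ^ 3 + x) -` (q ` A)"
  proof
    show "phi ` A \<subseteq> (\<lambda>x. 2 * x ^ 3 + x) -` q ` A"
    proof
      fix x assume "x \<in> phi ` A"
      then obtain \<alpha> where a: "\<alpha> \<in> A" "x = phi \<alpha>" by auto
      have "\<alpha> \<in> {0..1}" using a(1) assms(2) by blast
      then have "2 * x ^ 3 + x = q \<alpha>" using phi_eq[of \<alpha>] a(2) unfolding q_def by simp
      then show "x \<in> (\<lambda>x. 2 * x ^ 3 + x) -` q ` A" using a(1) by simp
    qed
    show "(\<lambda>x. 2 * x ^ 3 + x) -` q ` A \<subseteq> phi ` A"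
    proof
      fix x assume "x \<in> (\<lambda>x. 2 * x ^ 3 + x) -` q ` A"
      then obtain \<alpha> where a: "\<alpha> \<in> A" "2 * x ^ 3 + x = q \<alpha>" by auto
      have "\<alpha> \<in> {0..1}" using a(1) assms(2) by blast
      then have p: "2 * phi \<alpha> ^ 3 + phi \<alpha> = q \<alpha>" using phi_eq[of \<alpha>] unfolding q_def by simp
      have "x = phi \<alpha>"
      proof (rule ccontr)
        assume "x \<noteq> phi \<alpha>"
        then consider "x < phi \<alpha>" | "phi \<alpha> < x" by linarith
        then show False
        proof cases
          case 1 then show False using cube_strict_mono[OF 1] a p by linarith
        next
          case 2 then show False using cube_strict_mono[OF 2] a p by linarith
        qed
      qed
      then show "x \<in> phi ` A" using a by auto
    qed
  qed
  have cp: "continuous_on UNIV (\<lambda>x::real. 2 * x ^ 3 + x)" by (intro continuous_intros)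
  show ?thesis unfolding eq
    by (rule closed_vimage[OF compact_imp_closed[OF cqA] cp])
qed

lemma prod_deriv2:
  fixes g h :: "real \<Rightarrow> real"
  assumes "(g has_real_derivative g') (at (fst p))" "(h has_real_derivative h') (at (snd p))"
  shows "((\<lambda>p. c * g (fst p) * h (snd p)) has_derivative
     (\<lambda>d. (c * g' * h (snd p)) * fst d + (c * g (fst p) * h') * snd d)) (at p within S)"
proof -
  have 1: "((\<lambda>p. g (fst p)) has_derivative (\<lambda>d. fst d * g')) (at p within S)"
    by (rule DERIV_compose_FDERIV[where g=fst, OF assms(1)]) (auto intro!: derivative_eq_intros)
  have 2: "((\<lambda>p. h (snd p)) has_derivative (\<lambda>d. snd d * h')) (at p within S)"
    by (rule DERIV_compose_FDERIV[where g=snd, OF assms(2)]) (auto intro!: derivative_eq_intros)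
  have "((\<lambda>p. c * g (fst p) * h (snd p)) has_derivative
     (\<lambda>d. c * g (fst p) * (snd d * h') + (c * (fst d * g')) * h (snd p))) (at p within S)"
    by (intro has_derivative_mult has_derivative_mult_right 1 2)
  then show ?thesis
    by (rule has_derivative_eq_rhs) (auto simp: algebra_simps)
qed

lemma term_bound:
  fixes c a b N :: real
  assumes "0 < c" "\<bar>a\<bar> \<le> 1000" "\<bar>b\<bar> \<le> 6 * N"
  shows "\<bar>c * a * b\<bar> \<le> 6000 * c * N"
proof -
  have "\<bar>a\<bar> * \<bar>b\<bar> \<le> 1000 * (6 * N)" by (rule mult_mono) (use assms in auto)
  then have "c * (\<bar>a\<bar> * \<bar>b\<bar>) \<le> c * (1000 * (6 * N))" using assms by (intro mult_left_mono) auto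
  moreover have "\<bar>c * a * b\<bar> = c * (\<bar>a\<bar> * \<bar>b\<bar>)" using assms(1) by (simp add: abs_mult)
  ultimately show ?thesis by simp
qed

locale L =
  fixes F :: "nat \<Rightarrow> real set" and c :: "nat \<Rightarrow> real"
  assumes F_closed: "\<And>n. n \<ge> 1 \<Longrightarrow> closed (F n)"
      and F_sub: "\<And>n. n \<ge> 1 \<Longrightarrow> F n \<subseteq> {0..1}"
      and F_mono: "\<And>n. n \<ge> 1 \<Longrightarrow> F n \<subseteq> F (Suc n)"
      and c_pos: "\<And>n. n \<ge> 1 \<Longrightarrow> c n > 0"
      and c_summable: "summable (\<lambda>k. 81^2 / 6 * real (Suc k) ^ 3 * c (Suc k))"
      and c_small: "(\<Sum>k. 81^2 / 6 * real (Suc k) ^ 3 * c (Suc k)) < 1"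
begin

definition "En k = E_set F (Suc k)"
definition "S = (UNIV :: real set) \<times> {0::real..}"
definition "T k p = c (Suc k) * G0 (En k) (fst p) * h_fun (Suc k) (snd p)"
definition "TX k p = c (Suc k) * G1 (En k) (fst p) * h_fun (Suc k) (snd p)"
definition "TZ k p = c (Suc k) * G0 (En k) (fst p) * H1 (Suc k) (snd p)"
definition "TXX k p = c (Suc k) * G2 (En k) (fst p) * h_fun (Suc k) (snd p)"
definition "TXZ k p = c (Suc k) * G1 (En k) (fst p) * H1 (Suc k) (snd p)"
definition "TZZ k p = c (Suc k) * G0 (En k) (fst p) * H2 (Suc k) (snd p)"
definition "M k = 6000 * c (Suc k) * real (Suc k) ^ 3"

lemma cpos: "0 < c (Suc k)" using c_pos by simp

lemma gap: "gapset (En k)"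
proof
  show "- {- 1<..<2} \<subseteq> En k" unfolding En_def E_set_def by auto
  have "closed (phi ` F (Suc k))" by (rule phi_image_closed) (use F_closed F_sub in auto)
  then show "closed (En k)" unfolding En_def E_set_def by (intro closed_Un) auto
qed

lemma En_mono: "k \<le> j \<Longrightarrow> En k \<subseteq> En j"
proof (induction j)
  case 0 then show ?case by simp
next
  case (Suc j)
  show ?case
  proof (cases "k = Suc j")
    case False
    then have "En k \<subseteq> En j" using Suc by simp
    also have "En j \<subseteq> En (Suc j)" using F_mono[of "Suc j"] unfolding En_def E_set_def by auto
    finally show ?thesis .
  qed simp
qed

lemma g_eq: "g_fun F (Suc k) = G0 (En k)"
  by (intro ext) (simp add: g_fun_def G0_def a_fun_def b_fun_def aE_def bE_def En_def)

lemma f_eq: "f_fun F c x z = x^2 + (\<Sum>k. T k (x, z))"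
  unfolding f_fun_def T_def g_eq by simp

lemma S_conv: "convex S" unfolding S_def by (intro convex_Times) auto

lemma M_summable: "summable M"
proof -
  have "summable (\<lambda>k. (6000 / (81^2/6)) * (81^2 / 6 * real (Suc k) ^ 3 * c (Suc k)))"
    by (rule summable_mult[OF c_summable])
  then show ?thesis unfolding M_def by (simp add: algebra_simps)
qed

lemma bounds:
  assumes "p \<in> S"
  shows "\<bar>T k p\<bar> \<le> M k" "\<bar>TX k p\<bar> \<le> M k" "\<bar>TZ k p\<bar> \<le> M k"
    "\<bar>TXX k p\<bar> \<le> M k" "\<bar>TXZ k p\<bar> \<le> M k" "\<bar>TZZ k p\<bar> \<le> M k"
proof -
  interpret gapset "En k" by (rule gap)
  have z: "0 \<le> snd p" using assms unfolding S_def by auto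
  have n1: "1 \<le> Suc k" by simp
  note hb = H_bounds[OF z n1]
  note gb = G_crude[of "fst p"]
  show "\<bar>T k p\<bar> \<le> M k" unfolding T_def M_def by (rule term_bound[OF cpos gb(1) hb(1)])
  show "\<bar>TX k p\<bar> \<le> M k" unfolding TX_def M_def by (rule term_bound[OF cpos gb(2) hb(1)])
  show "\<bar>TZ k p\<bar> \<le> M k" unfolding TZ_def M_def by (rule term_bound[OF cpos gb(1) hb(2)])
  show "\<bar>TXX k p\<bar> \<le> M k" unfolding TXX_def M_def by (rule term_bound[OF cpos gb(3) hb(1)])
  show "\<bar>TXZ k p\<bar> \<le> M k" unfolding TXZ_def M_def by (rule term_bound[OF cpos gb(2) hb(2)])
  show "\<bar>TZZ k p\<bar> \<le> M k" unfolding TZZ_def M_def by (rule term_bound[OF cpos gb(1) hb(3)])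
qed

lemma summ: "p \<in> S \<Longrightarrow> summable (\<lambda>k. T k p)" "p \<in> S \<Longrightarrow> summable (\<lambda>k. TX k p)"
  "p \<in> S \<Longrightarrow> summable (\<lambda>k. TZ k p)"
  by (rule summable_comparison_test[OF _ M_summable]; use bounds in auto)+

definition "fx p = 2 * fst p + (\<Sum>k. TX k p)"
definition "fz p = (\<Sum>k. TZ k p)"
definition "fxx p = 2 + (\<Sum>k. TXX k p)"
definition "fxz p = (\<Sum>k. TXZ k p)"
definition "fzz p = (\<Sum>k. TZZ k p)"

lemma dT: "(T k has_derivative (\<lambda>d. TX k p * fst d + TZ k p * snd d)) (at p within A)"
proof -
  interpret gapset "En k" by (rule gap)
  show ?thesis unfolding T_def[abs_def] TX_def TZ_def
    by (rule prod_deriv2[OF G0_deriv H0_deriv])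
qed

lemma dTX: "(TX k has_derivative (\<lambda>d. TXX k p * fst d + TXZ k p * snd d)) (at p within A)"
proof -
  interpret gapset "En k" by (rule gap)
  show ?thesis unfolding TX_def[abs_def] TXX_def TXZ_def
    by (rule prod_deriv2[OF G1_deriv H0_deriv])
qed

lemma dTZ: "(TZ k has_derivative (\<lambda>d. TXZ k p * fst d + TZZ k p * snd d)) (at p within A)"
proof -
  interpret gapset "En k" by (rule gap)
  show ?thesis unfolding TZ_def[abs_def] TXZ_def TZZ_def
    by (rule prod_deriv2[OF G0_deriv H1_deriv])
qed

lemma D1: assumes "p \<in> S"
  shows "((\<lambda>p. f_fun F c (fst p) (snd p)) has_derivative (\<lambda>d. fx p * fst d + fz p * snd d)) (at p within S)"
proof -
  have s: "((\<lambda>p. \<Sum>k. T k p) has_derivative (\<lambda>d. (\<Sum>k. TX k p) * fst d + (\<Sum>k. TZ k p) * snd d)) (at p within S)"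
    by (rule series_grad[OF S_conv dT _ _ M_summable summ(1) assms]) (use bounds in auto)
  have "((\<lambda>p. (fst p)^2 + (\<Sum>k. T k p)) has_derivative
       (\<lambda>d. 2 * fst p * fst d + ((\<Sum>k. TX k p) * fst d + (\<Sum>k. TZ k p) * snd d))) (at p within S)"
    by (rule has_derivative_add[OF _ s]) (auto intro!: derivative_eq_intros)
  then show ?thesis unfolding f_eq fx_def fz_def prod.collapse
    by (rule has_derivative_eq_rhs) (auto simp: algebra_simps)
qed

lemma D2: assumes "p \<in> S"
  shows "(fx has_derivative (\<lambda>d. fxx p * fst d + fxz p * snd d)) (at p within S)"
proof -
  have s: "((\<lambda>p. \<Sum>k. TX k p) has_derivative (\<lambda>d. (\<Sum>k. TXX k p) * fst d + (\<Sum>k. TXZ k p) * snd d)) (at p within S)"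
    by (rule series_grad[OF S_conv dTX _ _ M_summable summ(2) assms]) (use bounds in auto)
  have "((\<lambda>p. 2 * fst p + (\<Sum>k. TX k p)) has_derivative
       (\<lambda>d. 2 * fst d + ((\<Sum>k. TXX k p) * fst d + (\<Sum>k. TXZ k p) * snd d))) (at p within S)"
    by (rule has_derivative_add[OF _ s]) (auto intro!: derivative_eq_intros)
  then show ?thesis unfolding fx_def[abs_def] fxx_def fxz_def
    by (rule has_derivative_eq_rhs) (auto simp: algebra_simps)
qed

lemma D3: assumes "p \<in> S"
  shows "(fz has_derivative (\<lambda>d. fxz p * fst d + fzz p * snd d)) (at p within S)"
  unfolding fz_def[abs_def] fxz_def fzz_def
  by (rule series_grad[OF S_conv dTZ _ _ M_summable summ(3) assms]) (use bounds in auto)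

lemma comp_fst: fixes g :: "real \<Rightarrow> real" assumes "\<And>x. isCont g x"
  shows "continuous_on A (\<lambda>p::real\<times>real. g (fst p))"
proof -
  have "continuous_on UNIV g" by (rule continuous_at_imp_continuous_on) (use assms in blast)
  moreover have "continuous_on A (fst :: real\<times>real \<Rightarrow> real)" by (rule continuous_on_fst[OF continuous_on_id])
  ultimately show ?thesis by (rule continuous_on_compose2) auto
qed

lemma comp_snd: fixes g :: "real \<Rightarrow> real" assumes "\<And>x. isCont g x"
  shows "continuous_on A (\<lambda>p::real\<times>real. g (snd p))"
proof -
  have "continuous_on UNIV g" by (rule continuous_at_imp_continuous_on) (use assms in blast)
  moreover have "continuous_on A (snd :: real\<times>real \<Rightarrow> real)" by (rule continuous_on_snd[OF continuous_on_id])
  ultimately show ?thesis by (rule continuous_on_compose2) auto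
qed

lemma contT: "continuous_on A (TXX k)" "continuous_on A (TXZ k)" "continuous_on A (TZZ k)"
proof -
  interpret gapset "En k" by (rule gap)
  have g2: "continuous_on A (\<lambda>p. G2 (En k) (fst p))" by (rule comp_fst[OF G2_cont])
  have g1: "continuous_on A (\<lambda>p. G1 (En k) (fst p))" by (rule comp_fst[OF DERIV_isCont[OF G1_deriv]])
  have g0: "continuous_on A (\<lambda>p. G0 (En k) (fst p))" by (rule comp_fst[OF DERIV_isCont[OF G0_deriv]])
  have h0: "continuous_on A (\<lambda>p. h_fun (Suc k) (snd p))" by (rule comp_snd[OF DERIV_isCont[OF H0_deriv]])
  have h1: "continuous_on A (\<lambda>p. H1 (Suc k) (snd p))" by (rule comp_snd[OF DERIV_isCont[OF H1_deriv]])
  have h2: "continuous_on A (\<lambda>p. H2 (Suc k) (snd p))" by (rule comp_snd[OF H2_isCont])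
  have cc: "continuous_on A (\<lambda>p::real\<times>real. c (Suc k))" by (rule continuous_on_const)
  show "continuous_on A (TXX k)" unfolding TXX_def[abs_def]
    by (rule continuous_on_mult[OF continuous_on_mult[OF cc g2] h0])
  show "continuous_on A (TXZ k)" unfolding TXZ_def[abs_def]
    by (rule continuous_on_mult[OF continuous_on_mult[OF cc g1] h1])
  show "continuous_on A (TZZ k)" unfolding TZZ_def[abs_def]
    by (rule continuous_on_mult[OF continuous_on_mult[OF cc g0] h2])
qed

lemma cont2: "continuous_on S fxx" "continuous_on S fxz" "continuous_on S fzz"
proof -
  have "continuous_on S (\<lambda>p. \<Sum>k. TXX k p)"
    by (rule series_cont[OF contT(1) _ M_summable]) (use bounds in auto)
  then show "continuous_on S fxx" unfolding fxx_def[abs_def] by (intro continuous_intros)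
  show "continuous_on S fxz" unfolding fxz_def[abs_def]
    by (rule series_cont[OF contT(2) _ M_summable]) (use bounds in auto)
  show "continuous_on S fzz" unfolding fzz_def[abs_def]
    by (rule series_cont[OF contT(3) _ M_summable]) (use bounds in auto)
qed

end


context L begin

lemma T_nonneg: "0 \<le> T k p"
proof -
  interpret gapset "En k" by (rule gap)
  show ?thesis unfolding T_def h_fun_def using cpos[of k] G_nonneg[of "fst p"] by simp
qed

lemma TZ_nonpos: "TZ k p \<le> 0"
proof -
  interpret gapset "En k" by (rule gap)
  have "0 \<le> c (Suc k) * G0 (En k) (fst p)" using cpos[of k] G_nonneg[of "fst p"] by simp
  moreover have "H1 (Suc k) (snd p) \<le> 0" unfolding H1_def by simp
  ultimately show ?thesis unfolding TZ_def by (simp add: mult_nonneg_nonpos)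
qed

lemma C2: "C2_on S (\<lambda>p. f_fun F c (fst p) (snd p))"
proof -
  define Lx where "Lx = (fst_blinfun :: (real \<times> real) \<Rightarrow>\<^sub>L real)"
  define Lz where "Lz = (snd_blinfun :: (real \<times> real) \<Rightarrow>\<^sub>L real)"
  define B1 where "B1 = Blinfun (\<lambda>d::real\<times>real. fst d *\<^sub>R Lx)"
  define B2 where "B2 = Blinfun (\<lambda>d::real\<times>real. snd d *\<^sub>R Lx)"
  define B3 where "B3 = Blinfun (\<lambda>d::real\<times>real. fst d *\<^sub>R Lz)"
  define B4 where "B4 = Blinfun (\<lambda>d::real\<times>real. snd d *\<^sub>R Lz)"
  have bl: "bounded_linear (\<lambda>d::real\<times>real. fst d *\<^sub>R (L :: (real \<times> real) \<Rightarrow>\<^sub>L real))"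
    "bounded_linear (\<lambda>d::real\<times>real. snd d *\<^sub>R (L :: (real \<times> real) \<Rightarrow>\<^sub>L real))" for L
    by (rule bounded_linear_compose[OF bounded_linear_scaleR_left bounded_linear_fst],
        rule bounded_linear_compose[OF bounded_linear_scaleR_left bounded_linear_snd])
  have B: "blinfun_apply B1 = (\<lambda>d. fst d *\<^sub>R Lx)" "blinfun_apply B2 = (\<lambda>d. snd d *\<^sub>R Lx)"
    "blinfun_apply B3 = (\<lambda>d. fst d *\<^sub>R Lz)" "blinfun_apply B4 = (\<lambda>d. snd d *\<^sub>R Lz)"
    unfolding B1_def B2_def B3_def B4_def by (simp_all add: bounded_linear_Blinfun_apply bl)
  define u' where "u' p = fx p *\<^sub>R Lx + fz p *\<^sub>R Lz" for p
  define u'' where "u'' p = fxx p *\<^sub>R B1 + fxz p *\<^sub>R B2 + fxz p *\<^sub>R B3 + fzz p *\<^sub>R B4" for p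
  have 1: "((\<lambda>p. f_fun F c (fst p) (snd p)) has_derivative blinfun_apply (u' p)) (at p within S)"
    if "p \<in> S" for p
  proof -
    have "blinfun_apply (u' p) = (\<lambda>d. fx p * fst d + fz p * snd d)"
      unfolding u'_def Lx_def Lz_def by (auto simp: blinfun.add_left blinfun.scaleR_left)
    then show ?thesis using D1[OF that] by simp
  qed
  have 2: "(u' has_derivative blinfun_apply (u'' p)) (at p within S)" if "p \<in> S" for p
  proof -
    have "((\<lambda>p. fx p *\<^sub>R Lx + fz p *\<^sub>R Lz) has_derivative
      (\<lambda>d. (fxx p * fst d + fxz p * snd d) *\<^sub>R Lx + (fxz p * fst d + fzz p * snd d) *\<^sub>R Lz)) (at p within S)"
      by (intro has_derivative_add has_derivative_scaleR_left D2[OF that] D3[OF that])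
    moreover have "blinfun_apply (u'' p) =
      (\<lambda>d. (fxx p * fst d + fxz p * snd d) *\<^sub>R Lx + (fxz p * fst d + fzz p * snd d) *\<^sub>R Lz)"
      unfolding u''_def by (auto simp: blinfun.add_left blinfun.scaleR_left B algebra_simps)
    ultimately show ?thesis unfolding u'_def[abs_def] by simp
  qed
  have 3: "continuous_on S u''"
    unfolding u''_def[abs_def] using cont2
    by (intro continuous_on_add continuous_on_scaleR continuous_on_const) auto
  show ?thesis unfolding C2_on_def using 1 2 3 by blast
qed

lemma part_i: "0 \<le> z \<Longrightarrow> f_fun F c x z \<ge> x^2"
proof -
  assume z: "0 \<le> z"
  have "(x, z) \<in> S" using z unfolding S_def by simp
  then have "0 \<le> (\<Sum>k. T k (x, z))" using summ(1) T_nonneg by (intro suminf_nonneg) auto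
  then show ?thesis unfolding f_eq by simp
qed

lemma part_iii: "x \<in> (\<Union>n\<in>{1..}. E_set F n) \<longleftrightarrow> (\<exists>z\<ge>0. f_fun F c x z = x^2)"
proof
  assume "x \<in> (\<Union>n\<in>{1..}. E_set F n)"
  then obtain n where n: "1 \<le> n" "x \<in> E_set F n" by auto
  then obtain m where m: "n = Suc m" by (cases n) auto
  have xm: "x \<in> En m" using n m unfolding En_def by simp
  have "T k (x, real n) = 0" for k
  proof (cases "Suc k \<le> n")
    case True
    then have "h_fun (Suc k) (real n) = 0" unfolding h_fun_def by simp
    then show ?thesis unfolding T_def by simp
  next
    case False
    then have "m \<le> k" using m by simp
    then have xk: "x \<in> En k" using En_mono xm by blast
    interpret gapset "En k" by (rule gap)
    have "G0 (En k) x = 0" using G_zero_iff xk by simp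
    then show ?thesis unfolding T_def by simp
  qed
  then have "f_fun F c x (real n) = x^2" unfolding f_eq by simp
  then show "\<exists>z\<ge>0. f_fun F c x z = x^2" by (intro exI[of _ "real n"]) auto
next
  assume "\<exists>z\<ge>0. f_fun F c x z = x^2"
  then obtain z where z: "0 \<le> z" "f_fun F c x z = x^2" by auto
  have p: "(x, z) \<in> S" using z unfolding S_def by simp
  have "(\<Sum>k. T k (x, z)) = 0" using z(2) unfolding f_eq by simp
  then have all0: "\<forall>k. T k (x, z) = 0" using suminf_eq_zero_iff[OF summ(1)[OF p]] T_nonneg by blast
  obtain k where "z < real k" using reals_Archimedean2[of z] by blast
  then have k: "z < real (Suc k)" by simp
  have hpos: "0 < h_fun (Suc k) z" unfolding h_fun_def using k by simp
  interpret gapset "En k" by (rule gap)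
  have "c (Suc k) * G0 (En k) x * h_fun (Suc k) z = 0" using all0 unfolding T_def by simp
  then have "G0 (En k) x = 0" using hpos cpos[of k] by simp
  then have "x \<in> En k" using G_zero_iff by simp
  then show "x \<in> (\<Union>n\<in>{1..}. E_set F n)" unfolding En_def by auto
qed

lemma part_iv:
  assumes z: "0 \<le> z" and gt: "f_fun F c x z > x^2"
  shows "\<exists>D. ((\<lambda>t. f_fun F c x t) has_real_derivative D) (at z within {0..}) \<and> D < 0"
proof -
  have p: "(x, z) \<in> S" using z unfolding S_def by simp
  have "(\<Sum>k. T k (x, z)) \<noteq> 0" using gt unfolding f_eq by simp
  then obtain k where k: "T k (x, z) \<noteq> 0"
    using suminf_eq_zero_iff[OF summ(1)[OF p]] T_nonneg by blast
  interpret gapset "En k" by (rule gap)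
  have "c (Suc k) * G0 (En k) x * h_fun (Suc k) z \<noteq> 0" using k unfolding T_def by simp
  then have g: "G0 (En k) x \<noteq> 0" and h: "h_fun (Suc k) z \<noteq> 0" by auto
  then have "max (real (Suc k) - z) 0 \<noteq> 0" unfolding h_fun_def by auto
  moreover have "0 \<le> max (real (Suc k) - z) 0" by simp
  ultimately have "0 < max (real (Suc k) - z) 0" by linarith
  then have H: "H1 (Suc k) z < 0" unfolding H1_def by simp
  have "0 < c (Suc k) * G0 (En k) x" using g G_nonneg[of x] cpos[of k] by (simp add: order_less_le)
  then have tz: "TZ k (x, z) < 0" unfolding TZ_def using H by (simp add: mult_pos_neg)
  have sTZ: "summable (\<lambda>k. - TZ k (x, z))" using summ(3)[OF p] by (rule summable_minus)
  have "0 < (\<Sum>j. - TZ j (x, z))"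
    by (rule suminf_pos2[OF sTZ]) (use TZ_nonpos tz in auto)
  then have neg: "fz (x, z) < 0" unfolding fz_def using suminf_minus[OF summ(3)[OF p]] by simp
  have emb: "((\<lambda>t. (x, t)) has_derivative (\<lambda>h. (0, h))) (at z within {0..})"
    by (auto intro!: derivative_eq_intros)
  have sub: "(\<lambda>t. (x, t)) ` {0..} \<subseteq> S" unfolding S_def by auto
  have "((\<lambda>p. f_fun F c (fst p) (snd p)) has_derivative (\<lambda>d. fx (x, z) * fst d + fz (x, z) * snd d))
      (at ((\<lambda>t. (x, t)) z) within (\<lambda>t. (x, t)) ` {0..})"
    using has_derivative_subset[OF D1[OF p] sub] by simp
  from has_derivative_in_compose[OF emb this]
  have "((\<lambda>t. f_fun F c x t) has_derivative (\<lambda>h. fz (x, z) * h)) (at z within {0..})"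
    by simp
  then have "((\<lambda>t. f_fun F c x t) has_derivative (*) (fz (x, z))) (at z within {0..})"
    by (rule has_derivative_eq_rhs) (auto simp: mult.commute)
  then show ?thesis using neg unfolding has_field_derivative_def by blast
qed

end


lemma conv_core:
  fixes u v m N c w A B :: real
  assumes u: "0 \<le> u" and v: "0 \<le> v" and uv: "u + v \<le> 3" and m: "0 \<le> m" "m \<le> N"
    and c: "0 < c" and w: "w = 81^2 / 6 * N^3 * c"
  shows "0 \<le> 2 * w * A^2 + c * (6 * u * v * ((v - u)^2 - u * v) * A * A * m^3
            + 2 * (3 * u^2 * v^2 * (v - u)) * A * (-3 * m^2 * B) + u^3 * v^3 * (6 * m * B * B))"
proof -
  define s where "s = u * v"
  define d where "d = v - u"
  define X where "X = m * A"
  define Y where "Y = s * B"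
  define K :: real where "K = 81^2 / 6"
  have s0: "0 \<le> s" unfolding s_def using u v by simp
  have "4 * s \<le> (u + v)^2" unfolding s_def by (simp add: power2_eq_square algebra_simps) (metis sum_squares_ge_zero add.commute diff_ge_0_iff_ge power2_diff power2_eq_square mult.commute zero_le_power2 diff_add_cancel)
  moreover have "(u + v)^2 \<le> 3^2" using u v uv by (intro power_mono) auto
  ultimately have s94: "s \<le> 9/4" by simp
  have "d^2 \<le> (u + v)^2" unfolding d_def using u v by (simp add: power2_eq_square algebra_simps)
  then have d9: "d^2 \<le> 9" using \<open>(u + v)^2 \<le> 3^2\<close> by simp
  have sd: "s * d^2 \<le> 9/4 * 9" by (rule mult_mono) (use s0 s94 d9 in auto)
  have ss: "s * s \<le> 9/4 * (9/4)" by (rule mult_mono) (use s0 s94 in auto)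
  have coef: "0 \<le> 2 * K - 15/2 * (s * d^2) - 6 * (s * s)" using sd ss unfolding K_def by simp
  have inner: "0 \<le> 6 * s * (Y - 3/2 * d * X)^2 + X^2 * (2 * K - 15/2 * (s * d^2) - 6 * (s * s))"
    using s0 coef by (intro add_nonneg_nonneg mult_nonneg_nonneg) auto
  have m3: "m^3 \<le> N^3" using m by (intro power_mono) auto
  have wK: "2 * K * c * m^3 * A^2 \<le> 2 * w * A^2"
  proof -
    have "K * c * m^3 \<le> K * c * N^3" using m3 c unfolding K_def by (intro mult_left_mono) auto
    then have "2 * (K * c * m^3) * A^2 \<le> 2 * (K * c * N^3) * A^2" by (intro mult_right_mono) auto
    then show ?thesis unfolding w K_def by (simp add: algebra_simps)
  qed
  have id: "2 * K * c * m^3 * A^2 + c * (6 * u * v * ((v - u)^2 - u * v) * A * A * m^3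
            + 2 * (3 * u^2 * v^2 * (v - u)) * A * (-3 * m^2 * B) + u^3 * v^3 * (6 * m * B * B))
     = c * m * (6 * s * (Y - 3/2 * d * X)^2 + X^2 * (2 * K - 15/2 * (s * d^2) - 6 * (s * s)))"
    unfolding s_def d_def X_def Y_def by algebra
  have "0 \<le> c * m * (6 * s * (Y - 3/2 * d * X)^2 + X^2 * (2 * K - 15/2 * (s * d^2) - 6 * (s * s)))"
    using c m inner by simp
  then show ?thesis using id wK by linarith
qed


lemma chain_eq:
  fixes F :: "real \<Rightarrow> real"
  assumes "\<And>y. (F has_real_derivative F' y) (at y)" "(g has_real_derivative g') (at x within s)"
    "D = F' (g x) * g'"
  shows "((\<lambda>x. F (g x)) has_real_derivative D) (at x within s)"
  using DERIV_chain2[OF assms(1) assms(2)] assms(3) by simp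

lemma convex_on_eqI:
  assumes "convex_on A f" "\<And>x. x \<in> A \<Longrightarrow> f x = g x"
  shows "convex_on A g"
proof -
  have cA: "convex A" using assms(1) by (rule convex_on_imp_convex)
  show ?thesis
  proof (rule convex_onI[OF _ cA])
    fix t :: real and x y assume t: "0 < t" "t < 1" and xy: "x \<in> A" "y \<in> A"
    have "(1 - t) *\<^sub>R x + t *\<^sub>R y \<in> A" using cA xy t by (intro convexD) auto
    then show "g ((1 - t) *\<^sub>R x + t *\<^sub>R y) \<le> (1 - t) * g x + t * g y"
      using convex_onD[OF assms(1), of t x y] t xy assms(2) by simp
  qed
qed

lemma convex_on_suminf:
  fixes Q :: "nat \<Rightarrow> 'a::real_vector \<Rightarrow> real"
  assumes cA: "convex A" and Q: "\<And>k. convex_on A (Q k)" and s: "\<And>p. p \<in> A \<Longrightarrow> summable (\<lambda>k. Q k p)"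
  shows "convex_on A (\<lambda>p. \<Sum>k. Q k p)"
proof (rule convex_onI[OF _ cA])
  fix t :: real and x y assume t: "0 < t" "t < 1" and xy: "x \<in> A" "y \<in> A"
  have m: "(1 - t) *\<^sub>R x + t *\<^sub>R y \<in> A" using cA xy t by (intro convexD) auto
  have sx: "summable (\<lambda>k. (1 - t) * Q k x)" using s[OF xy(1)] by (rule summable_mult)
  have sy: "summable (\<lambda>k. t * Q k y)" using s[OF xy(2)] by (rule summable_mult)
  have "(\<Sum>k. Q k ((1 - t) *\<^sub>R x + t *\<^sub>R y)) \<le> (\<Sum>k. (1 - t) * Q k x + t * Q k y)"
    by (rule suminf_le) (use convex_onD[OF Q, of t x y] t xy s[OF m] summable_add[OF sx sy] in auto)
  also have "\<dots> = (\<Sum>k. (1 - t) * Q k x) + (\<Sum>k. t * Q k y)" by (rule suminf_add[OF sx sy, symmetric])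
  also have "\<dots> = (1 - t) * (\<Sum>k. Q k x) + t * (\<Sum>k. Q k y)"
    using suminf_mult[OF s[OF xy(1)], of "1 - t"] suminf_mult[OF s[OF xy(2)], of t] by simp
  finally show "(\<Sum>k. Q k ((1 - t) *\<^sub>R x + t *\<^sub>R y)) \<le> (1 - t) * (\<Sum>k. Q k x) + t * (\<Sum>k. Q k y)" .
qed

lemma convex_fst_sq: "convex A \<Longrightarrow> convex_on A (\<lambda>p::real\<times>real. (fst p)^2)"
proof (rule convex_onI)
  fix t :: real and x y :: "real \<times> real" assume t: "0 < t" "t < 1"
  have "(1 - t) * (fst x)^2 + t * (fst y)^2 - ((1 - t) * fst x + t * fst y)^2 = (1 - t) * t * (fst x - fst y)^2"
    by (simp add: power2_eq_square algebra_simps)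
  moreover have "0 \<le> (1 - t) * t * (fst x - fst y)^2" using t by simp
  ultimately show "(fst ((1 - t) *\<^sub>R x + t *\<^sub>R y))^2 \<le> (1 - t) * (fst x)^2 + t * (fst y)^2" by simp
qed

context L begin

definition "w k = 81^2 / 6 * real (Suc k) ^ 3 * c (Suc k)"
definition "Q k p = w k * (fst p)^2 + T k p"

lemma Q_conv: "convex_on S (Q k)"
proof (rule convex_onI[OF _ S_conv])
  interpret gapset "En k" by (rule gap)
  fix t :: real and p q :: "real \<times> real" assume t: "0 < t" "t < 1" and pq: "p \<in> S" "q \<in> S"
  define A where "A = fst q - fst p"
  define B where "B = snd q - snd p"
  define X where "X s = fst p + s * A" for s
  define Z where "Z s = snd p + s * B" for s
  define N where "N = real (Suc k)"
  define cc where "cc = c (Suc k)"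
  define ww where "ww = w k"
  define E where "E = En k"
  define \<psi> where "\<psi> s = ww * (X s)^2 + cc * G0 E (X s) * h_fun (Suc k) (Z s)" for s
  define \<psi>' where "\<psi>' s = 2 * ww * X s * A + cc * (G1 E (X s) * A * h_fun (Suc k) (Z s) + G0 E (X s) * (H1 (Suc k) (Z s) * B))" for s
  define \<psi>'' where "\<psi>'' s = 2 * ww * A^2 + cc * (G2 E (X s) * A * A * h_fun (Suc k) (Z s)
      + 2 * G1 E (X s) * A * (H1 (Suc k) (Z s) * B) + G0 E (X s) * (H2 (Suc k) (Z s) * B * B))" for s
  have dX: "(X has_real_derivative A) (at s)" for s unfolding X_def[abs_def] by (auto intro!: derivative_eq_intros)
  have dZ: "(Z has_real_derivative B) (at s)" for s unfolding Z_def[abs_def] by (auto intro!: derivative_eq_intros)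
  have d0: "((\<lambda>s. G0 E (X s)) has_real_derivative G1 E (X s) * A) (at s)" for s
    by (rule chain_eq[OF G0_deriv[unfolded E_def[symmetric]] dX refl])
  have d1: "((\<lambda>s. G1 E (X s)) has_real_derivative G2 E (X s) * A) (at s)" for s
    by (rule chain_eq[OF G1_deriv[unfolded E_def[symmetric]] dX refl])
  have e0: "((\<lambda>s. h_fun (Suc k) (Z s)) has_real_derivative H1 (Suc k) (Z s) * B) (at s)" for s
    by (rule chain_eq[OF H0_deriv dZ refl])
  have e1: "((\<lambda>s. H1 (Suc k) (Z s)) has_real_derivative H2 (Suc k) (Z s) * B) (at s)" for s
    by (rule chain_eq[OF H1_deriv dZ refl])
  have D\<psi>: "(\<psi> has_real_derivative \<psi>' s) (at s)" for s
    unfolding \<psi>_def[abs_def] \<psi>'_def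
    by (auto intro!: derivative_eq_intros d0 e0 dX simp: algebra_simps)
  have D\<psi>': "(\<psi>' has_real_derivative \<psi>'' s) (at s)" for s
    unfolding \<psi>'_def[abs_def] \<psi>''_def
    by (auto intro!: derivative_eq_intros d0 d1 e0 e1 dX simp: algebra_simps power2_eq_square)
  have pos: "0 \<le> \<psi>'' s" if s: "s \<in> {0..1}" for s
  proof -
    have z0: "0 \<le> snd p" "0 \<le> snd q" using pq unfolding S_def by auto
    have "Z s = (1 - s) * snd p + s * snd q" unfolding Z_def B_def by (simp add: algebra_simps)
    then have Zs: "0 \<le> Z s" using s z0 by (auto intro!: add_nonneg_nonneg mult_nonneg_nonneg)
    have m: "0 \<le> max (N - Z s) 0" "max (N - Z s) 0 \<le> N" using Zs unfolding N_def by auto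
    have w: "ww = 81^2 / 6 * N^3 * cc" unfolding ww_def w_def N_def cc_def by simp
    note core = conv_core[OF uv_bounds(1)[of "X s"] uv_bounds(2)[of "X s"] _ m cpos[of k, folded cc_def] w, of A B]
    have "bE E (X s) - aE E (X s) \<le> 3" using uv_bounds(3)[of "X s"] unfolding E_def .
    then have "X s - aE E (X s) + (bE E (X s) - X s) \<le> 3" by simp
    from core[unfolded E_def[symmetric], OF this]
    show ?thesis unfolding \<psi>''_def G0_def G1_def G2_def h_fun_def H1_def H2_def N_def by simp
  qed
  have cvx: "convex_on {0..1} \<psi>"
    by (rule f''_ge0_imp_convex[OF convex_real_interval(5) D\<psi> D\<psi>' pos])
  have "\<psi> ((1 - t) *\<^sub>R 0 + t *\<^sub>R 1) \<le> (1 - t) * \<psi> 0 + t * \<psi> 1"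
    by (rule convex_onD[OF cvx]) (use t in auto)
  moreover have "\<psi> ((1 - t) *\<^sub>R 0 + t *\<^sub>R 1) = Q k ((1 - t) *\<^sub>R p + t *\<^sub>R q)"
    unfolding \<psi>_def Q_def T_def X_def Z_def A_def B_def ww_def cc_def E_def
    by (simp add: algebra_simps)
  moreover have "\<psi> 0 = Q k p" "\<psi> 1 = Q k q"
    unfolding \<psi>_def Q_def T_def X_def Z_def A_def B_def ww_def cc_def E_def by simp_all
  ultimately show "Q k ((1 - t) *\<^sub>R p + t *\<^sub>R q) \<le> (1 - t) * Q k p + t * Q k q" by simp
qed

lemma w_summable: "summable w" using c_summable unfolding w_def[abs_def] .

lemma Q_summable: "p \<in> S \<Longrightarrow> summable (\<lambda>k. Q k p)"
  unfolding Q_def using summable_add[OF summable_mult2[OF w_summable] summ(1)] by simp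

lemma convex_f: "convex_on S (\<lambda>p. f_fun F c (fst p) (snd p))"
proof (rule convex_on_eqI)
  have W: "0 \<le> 1 - (\<Sum>k. w k)" using c_small unfolding w_def by simp
  show "convex_on S (\<lambda>p. (1 - (\<Sum>k. w k)) * (fst p)^2 + (\<Sum>k. Q k p))"
    by (intro convex_on_add convex_on_cmul W convex_fst_sq S_conv convex_on_suminf Q_conv Q_summable)
  fix p assume p: "p \<in> S"
  have "(\<Sum>k. Q k p) = (\<Sum>k. w k * (fst p)^2) + (\<Sum>k. T k p)"
    unfolding Q_def by (rule suminf_add[OF summable_mult2[OF w_summable] summ(1)[OF p], symmetric])
  also have "(\<Sum>k. w k * (fst p)^2) = (\<Sum>k. w k) * (fst p)^2"
    by (rule suminf_mult2[OF w_summable, symmetric])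
  finally show "(1 - (\<Sum>k. w k)) * (fst p)^2 + (\<Sum>k. Q k p) = f_fun F c (fst p) (snd p)"
    unfolding f_eq by (simp add: algebra_simps)
qed

end

theorem lemma6:
  fixes F :: "nat \<Rightarrow> real set" and c :: "nat \<Rightarrow> real"
  assumes F_closed: "\<And>n. n \<ge> 1 \<Longrightarrow> closed (F n)"
      and F_sub: "\<And>n. n \<ge> 1 \<Longrightarrow> F n \<subseteq> {0..1}"
      and F_mono: "\<And>n. n \<ge> 1 \<Longrightarrow> F n \<subseteq> F (Suc n)"
      and c_pos: "\<And>n. n \<ge> 1 \<Longrightarrow> c n > 0"
      and c_summable: "summable (\<lambda>k. 81^2 / 6 * real (Suc k) ^ 3 * c (Suc k))"
      and c_small: "(\<Sum>k. 81^2 / 6 * real (Suc k) ^ 3 * c (Suc k)) < 1"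
  shows "(\<forall>x z. z \<ge> 0 \<longrightarrow> f_fun F c x z \<ge> x ^ 2)
    \<and> C2_on (UNIV \<times> {0..}) (\<lambda>p. f_fun F c (fst p) (snd p))
    \<and> convex_on (UNIV \<times> {0..}) (\<lambda>p. f_fun F c (fst p) (snd p))
    \<and> (\<forall>x. x \<in> (\<Union>n\<in>{1..}. E_set F n) \<longleftrightarrow> (\<exists>z\<ge>0. f_fun F c x z = x ^ 2))
    \<and> (\<forall>x z. z \<ge> 0 \<longrightarrow> f_fun F c x z > x ^ 2 \<longrightarrow>
          (\<exists>D. ((\<lambda>t. f_fun F c x t) has_real_derivative D) (at z within {0..}) \<and> D < 0))"
proof -
  interpret L F c by (rule L.intro) (use assms in auto)
  show ?thesis
  proof (intro conjI)
    show "\<forall>x z. z \<ge> 0 \<longrightarrow> f_fun F c x z \<ge> x ^ 2" using part_i by blast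
    show "C2_on (UNIV \<times> {0..}) (\<lambda>p. f_fun F c (fst p) (snd p))" using C2 unfolding S_def .
    show "convex_on (UNIV \<times> {0..}) (\<lambda>p. f_fun F c (fst p) (snd p))" using convex_f unfolding S_def .
    show "\<forall>x. x \<in> (\<Union>n\<in>{1..}. E_set F n) \<longleftrightarrow> (\<exists>z\<ge>0. f_fun F c x z = x ^ 2)" using part_iii by blast
    show "\<forall>x z. z \<ge> 0 \<longrightarrow> f_fun F c x z > x ^ 2 \<longrightarrow>
          (\<exists>D. ((\<lambda>t. f_fun F c x t) has_real_derivative D) (at z within {0..}) \<and> D < 0)"
      using part_iv by blast
  qed
qed

end
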